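(* Let $d,J,n\ge1$, let $y_1,\dots,y_n\in\mathbb{R}^d$, and let $\{\theta^k\}_{k\in\mathbb N}$ be the sequence generated by the CEMM algorithm (described in the context) from an initial point $\theta^0\in\Theta$. Then the sequence $\{\Lambda(\theta^k\mid\mathbf y)\}_{k\in\mathbb N}$ is monotone non-decreasing and satisfies, for every $k$, $$\Lambda(\theta^{k+1}\mid\mathbf y)-\Lambda(\theta^k\mid\mathbf y)\ \ge\ D(\theta^{k+1},\theta^k\mid\mathbf y).$$
   Context: $\varphi(y\mid\mu,\Sigma)$ is the Gaussian density on $\mathbb R^d$ with mean $\mu$ and covariance $\Sigma$. $\Theta$ is the set of $\theta=(p_1,\dots,p_J,\mu_1,\dots,\mu_J,\Sigma_1,\dots,\Sigma_J)$ with $p_j\in(0,1)$, $\mu_j\in\mathbb R^d$, $\Sigma_j$ symmetric positive definite (proportions not required to sum to 1); write $\theta_j=(p_j,\mu_j,\Sigma_j)$. The observed log-likelihood is $L(\theta\mid\mathbf y)=\sum_{i=1}^n\log\sum_{j=1}^J p_j\varphi(y_i\mid\mu_j,\Sigma_j)$ and the modified log-likelihood is $\Lambda(\theta\mid\mathbf y)=L(\theta\mid\mathbf y)-n\big(\sum_{\ell=1}^J p_\ell-1\big)$. Let $t_{ij}(\theta)=p_j\varphi(y_i\mid\mu_j,\Sigma_j)/\sum_{\ell=1}^J p_\ell\varphi(y_i\mid\mu_\ell,\Sigma_\ell)$ and $D(\theta,\theta'\mid\mathbf y)=\sum_{i=1}^n\sum_{j=1}^J t_{ij}(\theta')\log\big(t_{ij}(\theta')/t_{ij}(\theta)\big)$.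 CEMM algorithm: given $\theta^k$, let $j=k-\lfloor k/J\rfloor J+1$ (so components are visited cyclically). Compute $t_{ij}(\theta^k)$ for $i=1,\dots,n$, set $p_j^{k+1}=\frac1n\sum_i t_{ij}(\theta^k)$, $\mu_j^{k+1}=\sum_i t_{ij}(\theta^k)y_i/\sum_i t_{ij}(\theta^k)$, $\Sigma_j^{k+1}=\sum_i t_{ij}(\theta^k)(y_i-\mu_j^{k+1})(y_i-\mu_j^{k+1})^{T}/\sum_i t_{ij}(\theta^k)$, and $\theta_\ell^{k+1}=\theta_\ell^k$ for $\ell\ne j$. (The updated proportions need not sum to $1$.) *)

theory Defs
  imports "HOL-Analysis.Analysis"
begin

text \<open>Parameters theta = (p, mu, Sigma), components indexed by j = 0..J-1
  (component j here is component j+1 of the paper). Data points y i, i = 0..n-1.\<close>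

type_synonym 'd param = "(nat \<Rightarrow> real) \<times> (nat \<Rightarrow> real^'d) \<times> (nat \<Rightarrow> real^'d^'d)"

definition prp :: "('d::finite) param \<Rightarrow> nat \<Rightarrow> real" where "prp th = fst th"
definition mn :: "('d::finite) param \<Rightarrow> nat \<Rightarrow> real^'d" where "mn th = fst (snd th)"
definition cv :: "('d::finite) param \<Rightarrow> nat \<Rightarrow> real^'d^'d" where "cv th = snd (snd th)"

definition pos_def_mat :: "real^('d::finite)^'d \<Rightarrow> bool" where
  "pos_def_mat S \<longleftrightarrow> transpose S = S \<and> (\<forall>x. x \<noteq> 0 \<longrightarrow> x \<bullet> (S *v x) > 0)"

definition gauss :: "real^('d::finite) \<Rightarrow> real^'d \<Rightarrow> real^'d^'d \<Rightarrow> real" where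
  "gauss y mu S = exp (- (1/2) * ((y - mu) \<bullet> (matrix_inv S *v (y - mu))))
                   / sqrt ((2 * pi) ^ CARD('d) * det S)"

text \<open>Membership in Theta (proportions need not sum to 1).\<close>
definition in_Theta :: "nat \<Rightarrow> ('d::finite) param \<Rightarrow> bool" where
  "in_Theta J th \<longleftrightarrow> (\<forall>j<J. 0 < prp th j \<and> prp th j < 1 \<and> pos_def_mat (cv th j))"

definition mix :: "nat \<Rightarrow> ('d::finite) param \<Rightarrow> real^'d \<Rightarrow> real" where
  "mix J th x = (\<Sum>l<J. prp th l * gauss x (mn th l) (cv th l))"

definition loglik :: "nat \<Rightarrow> nat \<Rightarrow> (nat \<Rightarrow> real^'d) \<Rightarrow> ('d::finite) param \<Rightarrow> real" where
  "loglik J n y th = (\<Sum>i<n. ln (mix J th (y i)))"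

definition modloglik :: "nat \<Rightarrow> nat \<Rightarrow> (nat \<Rightarrow> real^'d) \<Rightarrow> ('d::finite) param \<Rightarrow> real" where
  "modloglik J n y th = loglik J n y th - real n * ((\<Sum>l<J. prp th l) - 1)"

definition tij :: "nat \<Rightarrow> (nat \<Rightarrow> real^'d) \<Rightarrow> ('d::finite) param \<Rightarrow> nat \<Rightarrow> nat \<Rightarrow> real" where
  "tij J y th i j = prp th j * gauss (y i) (mn th j) (cv th j) / mix J th (y i)"

definition Dfun :: "nat \<Rightarrow> nat \<Rightarrow> (nat \<Rightarrow> real^'d) \<Rightarrow> 'd param \<Rightarrow> ('d::finite) param \<Rightarrow> real" where
  "Dfun J n y th th' = (\<Sum>i<n. \<Sum>j<J. tij J y th' i j * ln (tij J y th' i j / tij J y th i j))"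

text \<open>One CEMM step at iteration k: the component updated is j = k mod J
  (0-based; corresponds to k - floor(k/J) J + 1 in 1-based indexing).\<close>
definition cemm_step :: "nat \<Rightarrow> nat \<Rightarrow> (nat \<Rightarrow> real^'d) \<Rightarrow> nat \<Rightarrow> 'd param \<Rightarrow> ('d::finite) param" where
  "cemm_step J n y k th =
    (let j = k mod J;
         w = (\<lambda>i. tij J y th i j);
         sw = (\<Sum>i<n. w i);
         pj = sw / real n;
         muj = (\<Sum>i<n. w i *\<^sub>R y i) /\<^sub>R sw;
         Sj = (\<Sum>i<n. w i *\<^sub>R (\<chi> a b. (y i - muj) $ a * (y i - muj) $ b)) /\<^sub>R sw
     in ((prp th)(j := pj), (mn th)(j := muj), (cv th)(j := Sj)))"

end

theory Submission
  imports Defs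
begin


lemma sym_dot:
  fixes A :: "real^'n^'n"
  assumes "transpose A = A"
  shows "x \<bullet> (A *v y) = y \<bullet> (A *v x)"
proof -
  have "x \<bullet> (A *v y) = (x v* A) \<bullet> y" by (simp add: dot_lmul_matrix)
  also have "x v* A = transpose A *v x"
    by (metis transpose_transpose vector_transpose_matrix)
  finally show ?thesis using assms by (simp add: inner_commute)
qed

lemma quad_nonpos_imp:
  fixes a b :: real
  assumes "a \<ge> 0" and "\<And>t. 2*t*a + t^2*b \<le> 0"
  shows "a = 0"
proof (rule ccontr)
  assume "a \<noteq> 0" hence a: "a > 0" using assms by simp
  define t where "t = a / (\<bar>b\<bar> + 1)"
  have t: "t > 0" using a by (simp add: t_def)
  have "t * \<bar>b\<bar> \<le> a" using a unfolding t_def by (simp add: field_simps)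
  hence h1: "t*(t*\<bar>b\<bar>) \<le> t*a" using t by (simp add: mult_left_mono)
  have "t^2 * (-\<bar>b\<bar>) \<le> t^2*b" by (rule mult_left_mono) auto
  hence h2: "t^2*b \<ge> - (t*(t*\<bar>b\<bar>))" by (simp add: power2_eq_square)
  have h3: "t*a > 0" using t a by simp
  have "2*t*a + t^2*b = 2*(t*a) + t^2*b" by simp
  hence "2*t*a + t^2*b > 0" using h1 h2 h3 by linarith
  with assms(2)[of t] show False by simp
qed

lemma sym_eigvec:
  fixes A :: "real^'n^'n"
  assumes sym: "transpose A = A" and V: "subspace V" "V \<noteq> {0}" and inv: "\<And>x. x\<in>V \<Longrightarrow> A *v x \<in> V"
  shows "\<exists>v\<in>V. norm v = 1 \<and> A *v v = (v \<bullet> (A *v v)) *\<^sub>R v"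
proof -
  define K where "K = V \<inter> sphere 0 1"
  have cK: "compact K" unfolding K_def
    using closed_Int_compact[OF closed_subspace[OF V(1)] compact_sphere] .
  obtain x where x: "x \<in> V" "x \<noteq> 0" using V subspace_0 by blast
  have "x /\<^sub>R norm x \<in> K" using x V(1) unfolding K_def by (simp add: subspace_scale)
  hence ne: "K \<noteq> {}" by blast
  define f where "f = (\<lambda>x::real^'n. x \<bullet> (A *v x))"
  have cf: "continuous_on K f" unfolding f_def
    by (intro continuous_intros)
  obtain v where v: "v \<in> K" and vmax: "\<And>y. y \<in> K \<Longrightarrow> f y \<le> f v"
    using continuous_attains_sup[OF cK ne cf] by blast
  define l where "l = f v"
  have vV: "v \<in> V" and nv: "norm v = 1" using v by (auto simp: K_def)
  have bound: "f z \<le> l * (z \<bullet> z)" if z: "z \<in> V" for z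
  proof (cases "z = 0")
    case True then show ?thesis by (simp add: f_def)
  next
    case False
    let ?u = "z /\<^sub>R norm z"
    have "?u \<in> K" using z False V(1) unfolding K_def by (simp add: subspace_scale)
    hence h1: "f ?u \<le> l" using vmax l_def by blast
    have fs: "f ?u = inverse (norm z) * (inverse (norm z) * f z)"
      unfolding f_def by (simp add: matrix_vector_mult_scaleR)
    have nz: "norm z \<noteq> 0" using False by simp
    have h2: "(norm z)^2 * f ?u = f z"
      unfolding fs using nz by (simp add: power2_eq_square field_simps)
    have h3: "z \<bullet> z = (norm z)^2" by (simp add: power2_norm_eq_inner)
    have "(norm z)^2 * f ?u \<le> (norm z)^2 * l" using h1 by (rule mult_left_mono) simp
    thus ?thesis using h2 h3 by (simp add: mult.commute)
  qed
  define w where "w = A *v v - l *\<^sub>R v"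
  have wV: "w \<in> V" unfolding w_def using V(1) inv vV by (simp add: subspace_diff subspace_scale)
  have vv: "v \<bullet> v = 1" using nv by (simp add: norm_eq_1)
  have vw: "v \<bullet> w = 0" unfolding w_def l_def f_def using vv by (simp add: inner_diff_right)
  have Av: "A *v v = w + l *\<^sub>R v" by (simp add: w_def)
  have wv: "w \<bullet> v = 0" using vw by (simp add: inner_commute)
  have wAv: "w \<bullet> (A *v v) = w \<bullet> w"
    by (simp only: Av inner_add_right inner_scaleR_right wv)
  have vAw: "v \<bullet> (A *v w) = w \<bullet> w" using sym_dot[OF sym, of v w] wAv by simp
  have key: "2*t*(w \<bullet> w) + t^2*(f w - l*(w \<bullet> w)) \<le> 0" for t
  proof -
    have "v + t *\<^sub>R w \<in> V" using vV wV V(1) by (simp add: subspace_add subspace_scale)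
    hence b: "f (v + t *\<^sub>R w) \<le> l * ((v + t *\<^sub>R w) \<bullet> (v + t *\<^sub>R w))" by (rule bound)
    have e1: "A *v (v + t *\<^sub>R w) = A *v v + t *\<^sub>R (A *v w)"
      by (simp add: matrix_vector_right_distrib matrix_vector_mult_scaleR)
    have "f (v + t *\<^sub>R w) = v \<bullet> (A *v v) + t*(v \<bullet> (A *v w)) + t*(w \<bullet> (A *v v)) + t*(t*(w \<bullet> (A *v w)))"
      unfolding f_def e1 by (simp only: inner_add_left inner_add_right inner_scaleR_left inner_scaleR_right) (simp add: distrib_left)
    also have "\<dots> = l + 2*t*(w \<bullet> w) + t^2 * f w"
      unfolding vAw wAv l_def f_def by (simp add: power2_eq_square)
    finally have e2: "f (v + t *\<^sub>R w) = l + 2*t*(w \<bullet> w) + t^2 * f w" .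
    have "(v + t *\<^sub>R w) \<bullet> (v + t *\<^sub>R w) = v \<bullet> v + t*(v \<bullet> w) + t*(w \<bullet> v) + t*(t*(w \<bullet> w))"
      by (simp only: inner_add_left inner_add_right inner_scaleR_left inner_scaleR_right) (simp add: distrib_left)
    also have "\<dots> = 1 + t^2*(w \<bullet> w)" using vv vw wv by (simp add: power2_eq_square)
    finally have e3: "(v + t *\<^sub>R w) \<bullet> (v + t *\<^sub>R w) = 1 + t^2*(w \<bullet> w)" .
    have "l + 2*t*(w \<bullet> w) + t^2 * f w \<le> l * (1 + t^2*(w \<bullet> w))" using b e2 e3 by simp
    thus ?thesis by (simp add: right_diff_distrib distrib_left mult.left_commute)
  qed
  have "w \<bullet> w = 0" by (rule quad_nonpos_imp[OF _ key]) simp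
  hence "w = 0" by simp
  hence "A *v v = l *\<^sub>R v" unfolding w_def by simp
  thus ?thesis using vV nv l_def f_def by blast
qed

lemma sym_eigbasis:
  fixes A :: "real^'n^'n"
  assumes sym: "transpose A = A"
  shows "\<exists>B. finite B \<and> card B = CARD('n) \<and> pairwise orthogonal B \<and>
     (\<forall>b\<in>B. norm b = 1 \<and> A *v b = (b \<bullet> (A *v b)) *\<^sub>R b)"
proof -
  have "k \<le> CARD('n) \<Longrightarrow> \<exists>B. finite B \<and> card B = k \<and> pairwise orthogonal B \<and>
     (\<forall>b\<in>B. norm b = 1 \<and> A *v b = (b \<bullet> (A *v b)) *\<^sub>R b)" for k
  proof (induction k)
    case 0
    show ?case by (rule exI[of _ "{}"]) simp
  next
    case (Suc k)
    then obtain B where B: "finite B" "card B = k" "pairwise orthogonal B"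
      "\<forall>b\<in>B. norm b = 1 \<and> A *v b = (b \<bullet> (A *v b)) *\<^sub>R b" by auto
    have "0 \<notin> B" using B(4) by force
    hence "independent B" using B(3) pairwise_orthogonal_independent by blast
    hence "dim B = k" using B(2) dim_eq_card_independent by metis
    hence "dim B < DIM(real^'n)" using Suc.prems by simp
    then obtain x :: "real^'n" where x: "x \<noteq> 0" "\<And>y. y \<in> span B \<Longrightarrow> orthogonal x y"
      using orthogonal_to_subspace_exists by blast
    define V where "V = {y. \<forall>x \<in> B. orthogonal x y}"
    have sV: "subspace V" unfolding V_def by (rule subspace_orthogonal_to_vectors)
    have "x \<in> V" unfolding V_def using x(2) span_base orthogonal_commute by blast
    hence nV: "V \<noteq> {0}" using x(1) by blast
    have inv: "A *v y \<in> V" if y: "y \<in> V" for y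
    proof -
      have "orthogonal b (A *v y)" if b: "b \<in> B" for b
      proof -
        have "b \<bullet> (A *v y) = y \<bullet> (A *v b)" by (rule sym_dot[OF sym])
        also have "\<dots> = (b \<bullet> (A *v b)) * (y \<bullet> b)" using B(4) b by (metis inner_scaleR_right)
        also have "y \<bullet> b = 0" using y b unfolding V_def orthogonal_def by (simp add: inner_commute)
        finally show ?thesis by (simp add: orthogonal_def)
      qed
      thus ?thesis unfolding V_def by blast
    qed
    obtain v where v: "v \<in> V" "norm v = 1" "A *v v = (v \<bullet> (A *v v)) *\<^sub>R v"
      using sym_eigvec[OF sym sV nV inv] by blast
    have vB: "v \<notin> B"
    proof
      assume "v \<in> B" hence "orthogonal v v" using v(1) unfolding V_def by blast
      hence "v = 0" by (simp add: orthogonal_def)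
      thus False using v(2) by simp
    qed
    have po: "pairwise orthogonal (insert v B)"
      using B(3) v(1) unfolding V_def pairwise_insert by (auto simp: orthogonal_commute)
    show ?case
      by (rule exI[of _ "insert v B"]) (use B vB po v in auto)
  qed
  thus ?thesis by blast
qed

definition diagm :: "('n::finite \<Rightarrow> real) \<Rightarrow> real^'n^'n" where
  "diagm lam = (\<chi> i j. if i = j then lam i else 0)"

lemma sym_decomp:
  fixes A :: "real^'n^'n"
  assumes sym: "transpose A = A"
  obtains Q :: "real^'n^'n" and lam :: "'n \<Rightarrow> real" where "orthogonal_matrix Q"
    "A = Q ** diagm lam ** transpose Q"
    "\<And>i. lam i = column i Q \<bullet> (A *v column i Q)"
proof -
  obtain B where B: "finite B" "card B = CARD('n)" "pairwise orthogonal B"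
      "\<forall>b\<in>B. norm b = 1 \<and> A *v b = (b \<bullet> (A *v b)) *\<^sub>R b"
    using sym_eigbasis[OF sym] by blast
  obtain g where g: "bij_betw g (UNIV::'n set) B"
    using finite_same_card_bij[of "UNIV::'n set" B] B by auto
  define Q :: "real^'n^'n" where "Q = (\<chi> i j. g j $ i)"
  have col: "column j Q = g j" for j unfolding Q_def column_def by (simp add: vec_eq_iff)
  have gB: "g j \<in> B" for j using g bij_betwE by blast
  have oQ: "orthogonal_matrix Q"
    unfolding orthogonal_matrix_orthonormal_columns col
  proof (intro conjI allI impI)
    fix i show "norm (g i) = 1" using B(4) gB by blast
  next
    fix i j :: 'n assume "i \<noteq> j"
    hence "g i \<noteq> g j" using g by (metis UNIV_I bij_betw_iff_bijections)
    thus "orthogonal (g i) (g j)" using B(3) gB unfolding pairwise_def by blast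
  qed
  define lam where "lam j = g j \<bullet> (A *v g j)" for j
  have AQ: "A ** Q = Q ** diagm lam"
  proof -
    have "(A ** Q) $ i $ j = (Q ** diagm lam) $ i $ j" for i j
    proof -
      have "(A ** Q) $ i $ j = (A *v g j) $ i"
        by (simp add: matrix_matrix_mult_def matrix_vector_mult_def Q_def)
      also have "A *v g j = lam j *\<^sub>R g j" using B(4) gB unfolding lam_def by blast
      hence "(A *v g j) $ i = lam j * g j $ i" by simp
      also have "\<dots> = (\<Sum>k\<in>UNIV. if k = j then g k $ i * lam k else 0)" by simp
      also have "\<dots> = (\<Sum>k\<in>UNIV. g k $ i * (if k = j then lam k else 0))"
        by (rule sum.cong) auto
      also have "\<dots> = (Q ** diagm lam) $ i $ j"
        by (simp add: matrix_matrix_mult_def diagm_def Q_def)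
      finally show ?thesis .
    qed
    thus ?thesis by (simp add: vec_eq_iff)
  qed
  have "A = A ** (Q ** transpose Q)" using oQ by (simp add: orthogonal_matrix_def)
  also have "\<dots> = Q ** diagm lam ** transpose Q" by (simp add: matrix_mul_assoc AQ)
  finally have "A = Q ** diagm lam ** transpose Q" .
  moreover have "lam i = column i Q \<bullet> (A *v column i Q)" for i by (simp add: col lam_def)
  ultimately show ?thesis using that oQ by blast
qed

lemma pd_decomp:
  fixes A :: "real^'n^'n"
  assumes "pos_def_mat A"
  obtains Q :: "real^'n^'n" and lam :: "'n \<Rightarrow> real" where "orthogonal_matrix Q"
    "A = Q ** diagm lam ** transpose Q" "\<And>i. lam i > 0"
proof -
  have sym: "transpose A = A" using assms by (simp add: pos_def_mat_def)
  obtain Q lam where Q: "orthogonal_matrix Q" "A = Q ** diagm lam ** transpose Q"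
      "\<And>i. lam i = column i Q \<bullet> (A *v column i Q)"
    using sym_decomp[OF sym] by metis
  have "lam i > 0" for i
  proof -
    have "norm (column i Q) = 1" using Q(1) orthogonal_matrix_orthonormal_columns by blast
    hence "column i Q \<noteq> 0" by auto
    thus ?thesis using Q(3) assms by (simp add: pos_def_mat_def)
  qed
  thus ?thesis using that Q by blast
qed

lemma det_diagm: "det (diagm lam) = prod lam UNIV"
  by (subst det_diagonal) (auto simp: diagm_def)

lemma trace_diagm: "trace (diagm lam) = sum lam UNIV"
  by (simp add: trace_def diagm_def)

lemma det_conj:
  fixes Q :: "real^'n^'n"
  assumes "orthogonal_matrix Q"
  shows "det (Q ** D ** transpose Q) = det D"
proof -
  have "det Q * det Q = 1" using det_orthogonal_matrix[OF assms] by auto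
  thus ?thesis by (simp add: det_mul)
qed

lemma trace_conj:
  fixes Q :: "real^'n^'n"
  assumes "orthogonal_matrix Q"
  shows "trace (Q ** D ** transpose Q) = trace D"
proof -
  have "trace ((Q ** D) ** transpose Q) = trace (transpose Q ** (Q ** D))" by (rule trace_mul_sym)
  also have "\<dots> = trace D" using assms by (simp add: matrix_mul_assoc orthogonal_matrix_def)
  finally show ?thesis .
qed

lemma pd_det_pos:
  fixes A :: "real^'n^'n"
  assumes "pos_def_mat A"
  shows "det A > 0"
proof -
  obtain Q lam where Q: "orthogonal_matrix Q" "A = Q ** diagm lam ** transpose Q" "\<And>i. lam i > 0"
    using pd_decomp[OF assms] by metis
  show ?thesis using Q by (simp add: det_conj det_diagm prod_pos)
qed

lemma pd_logdet:
  fixes A :: "real^'n^'n"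
  assumes "pos_def_mat A"
  shows "ln (det A) \<le> trace A - real CARD('n)"
proof -
  obtain Q lam where Q: "orthogonal_matrix Q" "A = Q ** diagm lam ** transpose Q" "\<And>i. lam i > 0"
    using pd_decomp[OF assms] by metis
  have "ln (det A) = (\<Sum>i\<in>UNIV. ln (lam i))"
    using Q by (simp add: det_conj det_diagm ln_prod less_imp_neq[symmetric])
  also have "\<dots> \<le> (\<Sum>i\<in>UNIV. lam i - 1)" by (rule sum_mono) (simp add: ln_le_minus_one Q(3))
  also have "\<dots> = trace A - real CARD('n)"
    using Q by (simp add: trace_conj trace_diagm sum_subtractf)
  finally show ?thesis .
qed

lemma diagm_mult: "diagm a ** diagm b = diagm (\<lambda>i. a i * b i)"
proof -
  have "(diagm a ** diagm b) $ i $ j = diagm (\<lambda>i. a i * b i) $ i $ j" for i j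
  proof -
    have "(diagm a ** diagm b) $ i $ j = (\<Sum>k\<in>UNIV. (if i = k then a i else 0) * (if k = j then b k else 0))"
      by (simp add: matrix_matrix_mult_def diagm_def)
    also have "\<dots> = (\<Sum>k\<in>UNIV. if k = i then (if i = j then a i * b i else 0) else 0)"
      by (rule sum.cong) auto
    also have "\<dots> = diagm (\<lambda>i. a i * b i) $ i $ j" by (simp add: diagm_def)
    finally show ?thesis .
  qed
  thus ?thesis by (simp add: vec_eq_iff)
qed

lemma transpose_diagm: "transpose (diagm a) = diagm a"
  by (simp add: transpose_def diagm_def vec_eq_iff)

lemma pd_sqrt:
  fixes S :: "real^'n^'n"
  assumes "pos_def_mat S"
  obtains R where "transpose R = R" "R ** R = S"
proof -
  obtain Q lam where Q: "orthogonal_matrix Q" "S = Q ** diagm lam ** transpose Q" "\<And>i. lam i > 0"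
    using pd_decomp[OF assms] by metis
  define R where "R = Q ** diagm (\<lambda>i. sqrt (lam i)) ** transpose Q"
  have "transpose R = R" unfolding R_def by (simp add: matrix_transpose_mul transpose_diagm matrix_mul_assoc)
  moreover have "R ** R = S"
  proof -
    have "R ** R = Q ** diagm (\<lambda>i. sqrt (lam i)) ** (transpose Q ** Q) ** diagm (\<lambda>i. sqrt (lam i)) ** transpose Q"
      unfolding R_def by (simp add: matrix_mul_assoc)
    also have "\<dots> = Q ** (diagm (\<lambda>i. sqrt (lam i)) ** diagm (\<lambda>i. sqrt (lam i))) ** transpose Q"
      using Q(1) by (simp add: orthogonal_matrix_def matrix_mul_assoc)
    also have "diagm (\<lambda>i. sqrt (lam i)) ** diagm (\<lambda>i. sqrt (lam i)) = diagm lam"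
      unfolding diagm_mult using Q(3) by (simp add: less_imp_le)
    finally show ?thesis using Q(2) by simp
  qed
  ultimately show ?thesis using that by blast
qed

lemma logdet_pair:
  fixes C S :: "real^'n^'n"
  assumes C: "pos_def_mat C" and S: "pos_def_mat S"
  shows "ln (det C * det S) \<le> trace (C ** S) - real CARD('n)"
proof -
  obtain R where R: "transpose R = R" "R ** R = S" using pd_sqrt[OF S] by metis
  have symC: "transpose C = C" and pC: "\<And>x. x \<noteq> 0 \<Longrightarrow> x \<bullet> (C *v x) > 0"
    using C by (auto simp: pos_def_mat_def)
  have pS: "\<And>x. x \<noteq> 0 \<Longrightarrow> x \<bullet> (S *v x) > 0" using S by (auto simp: pos_def_mat_def)
  define N where "N = R ** C ** R"
  have "pos_def_mat N" unfolding pos_def_mat_def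
  proof (intro conjI allI impI)
    show "transpose N = N" unfolding N_def using R(1) symC by (simp add: matrix_transpose_mul matrix_mul_assoc)
  next
    fix x :: "real^'n" assume x: "x \<noteq> 0"
    have "R *v x \<noteq> 0"
    proof
      assume "R *v x = 0"
      hence "S *v x = 0" using R(2) by (metis matrix_vector_mul_assoc matrix_vector_mult_0_right)
      thus False using pS[OF x] by simp
    qed
    hence "0 < (R *v x) \<bullet> (C *v (R *v x))" by (rule pC)
    also have "(R *v x) \<bullet> (C *v (R *v x)) = x \<bullet> (R *v (C *v (R *v x)))"
      using sym_dot[OF R(1), of x "C *v (R *v x)"] by (simp add: inner_commute)
    also have "\<dots> = x \<bullet> (N *v x)" by (simp add: N_def matrix_vector_mul_assoc matrix_mul_assoc)
    finally show "0 < x \<bullet> (N *v x)" .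
  qed
  hence "ln (det N) \<le> trace N - real CARD('n)" by (rule pd_logdet)
  moreover have "det N = det C * det S" unfolding N_def R(2)[symmetric] by (simp add: det_mul)
  moreover have "trace N = trace (C ** S)"
  proof -
    have "trace N = trace (R ** (C ** R))" by (simp add: N_def matrix_mul_assoc)
    also have "\<dots> = trace ((C ** R) ** R)" by (rule trace_mul_sym)
    finally show ?thesis by (simp add: matrix_mul_assoc[symmetric] R(2))
  qed
  ultimately show ?thesis by simp
qed

lemma pd_inv:
  fixes S :: "real^'n^'n"
  assumes S: "pos_def_mat S"
  shows "pos_def_mat (matrix_inv S)" "matrix_inv S ** S = mat 1" "S ** matrix_inv S = mat 1"
    "det (matrix_inv S) * det S = 1"
proof -
  have "invertible S" using pd_det_pos[OF S] by (simp add: invertible_det_nz)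
  hence M: "S ** matrix_inv S = mat 1 \<and> matrix_inv S ** S = mat 1"
    unfolding invertible_def matrix_inv_def by (rule someI_ex)
  show "matrix_inv S ** S = mat 1" "S ** matrix_inv S = mat 1" using M by auto
  show "det (matrix_inv S) * det S = 1" using M by (metis det_I det_mul)
  define M' where "M' = matrix_inv S"
  have symS: "transpose S = S" and pS: "\<And>x. x \<noteq> 0 \<Longrightarrow> x \<bullet> (S *v x) > 0"
    using S by (auto simp: pos_def_mat_def)
  have "transpose M' ** S = mat 1"
    by (metis M M'_def matrix_transpose_mul symS transpose_mat)
  hence tM: "transpose M' = M'"
    by (metis M M'_def matrix_mul_assoc matrix_mul_lid matrix_mul_rid)
  show "pos_def_mat (matrix_inv S)" unfolding pos_def_mat_def M'_def[symmetric]
  proof (intro conjI allI impI tM)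
    fix x :: "real^'n" assume x: "x \<noteq> 0"
    define z where "z = M' *v x"
    have Sz: "S *v z = x" using M by (simp add: z_def M'_def matrix_vector_mul_assoc)
    hence "z \<noteq> 0" using x by auto
    hence "0 < z \<bullet> (S *v z)" by (rule pS)
    also have "\<dots> = x \<bullet> (M' *v x)" using Sz by (simp add: z_def inner_commute)
    finally show "0 < x \<bullet> (M' *v x)" .
  qed
qed



lemma quad_trace_sum:
  fixes C :: "real^'n^'n" and z :: "nat \<Rightarrow> real^'n"
  shows "(\<Sum>i\<in>I. t i * (z i \<bullet> (C *v z i))) =
     trace (C ** (\<Sum>i\<in>I. t i *\<^sub>R (\<chi> a b. z i $ a * z i $ b)))"
proof -
  have "(\<Sum>i\<in>I. t i * (z i \<bullet> (C *v z i))) = (\<Sum>i\<in>I. \<Sum>a\<in>UNIV. \<Sum>b\<in>UNIV. t i * (z i $ a * (C $ a $ b * z i $ b)))"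
    by (simp add: inner_vec_def matrix_vector_mult_def sum_distrib_left)
  also have "\<dots> = (\<Sum>a\<in>UNIV. \<Sum>i\<in>I. \<Sum>b\<in>UNIV. t i * (z i $ a * (C $ a $ b * z i $ b)))"
    by (rule sum.swap)
  also have "\<dots> = (\<Sum>a\<in>UNIV. \<Sum>b\<in>UNIV. \<Sum>i\<in>I. t i * (z i $ a * (C $ a $ b * z i $ b)))"
    by (rule sum.cong[OF refl], rule sum.swap)
  also have "\<dots> = (\<Sum>a\<in>UNIV. \<Sum>b\<in>UNIV. C $ a $ b * (\<Sum>i\<in>I. t i * (z i $ b * z i $ a)))"
    by (simp add: sum_distrib_left mult_ac)
  also have "\<dots> = trace (C ** (\<Sum>i\<in>I. t i *\<^sub>R (\<chi> a b. z i $ a * z i $ b)))"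
    by (simp add: trace_def matrix_matrix_mult_def sum_component)
  finally show ?thesis .
qed

lemma ln_gauss:
  fixes Sg :: "real^'d^'d"
  assumes "det Sg > 0"
  shows "ln (gauss y mu Sg) = - (1/2) * ((y - mu) \<bullet> (matrix_inv Sg *v (y - mu)))
           - (1/2) * ln ((2 * pi) ^ CARD('d)) - (1/2) * ln (det Sg)"
proof -
  have c: "(2 * pi) ^ CARD('d) > 0" by simp
  have "ln (gauss y mu Sg) = - (1/2) * ((y - mu) \<bullet> (matrix_inv Sg *v (y - mu)))
           - ln (sqrt ((2 * pi) ^ CARD('d) * det Sg))"
    unfolding gauss_def using assms c by (simp add: ln_div)
  also have "ln (sqrt ((2 * pi) ^ CARD('d) * det Sg)) = (1/2) * ln ((2 * pi) ^ CARD('d)) + (1/2) * ln (det Sg)"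
    using assms c by (simp add: ln_sqrt ln_mult)
  finally show ?thesis by simp
qed

lemma gauss_pos:
  fixes Sg :: "real^'d^'d"
  assumes "det Sg > 0"
  shows "gauss y mu Sg > 0"
  unfolding gauss_def using assms by simp

lemma quad_split:
  fixes C :: "real^'n^'n" and y :: "nat \<Rightarrow> real^'n"
  assumes W: "W = (\<Sum>i<n. t i)" "W \<noteq> 0"
  and m: "m = (\<Sum>i<n. t i *\<^sub>R y i) /\<^sub>R W"
  and S: "S = (\<Sum>i<n. t i *\<^sub>R (\<chi> a b. (y i - m) $ a * (y i - m) $ b)) /\<^sub>R W"
  shows "(\<Sum>i<n. t i * ((y i - mu) \<bullet> (C *v (y i - mu)))) =
     W * trace (C ** S) + W * ((m - mu) \<bullet> (C *v (m - mu)))"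
proof -
  define z where "z i = y i - m" for i
  define d where "d = m - mu"
  have ym: "y i - mu = z i + d" for i by (simp add: z_def d_def)
  have sy: "(\<Sum>i<n. t i *\<^sub>R y i) = W *\<^sub>R m" using W m by simp
  have sz: "(\<Sum>i<n. t i *\<^sub>R z i) = 0"
    by (simp add: z_def scaleR_right_diff_distrib sum_subtractf sy W(1)[symmetric] scaleR_sum_left[symmetric])
  have e: "(y i - mu) \<bullet> (C *v (y i - mu)) = z i \<bullet> (C *v z i) + z i \<bullet> (C *v d) + (d v* C) \<bullet> z i + d \<bullet> (C *v d)" for i
    unfolding ym by (simp add: matrix_vector_right_distrib inner_add_left inner_add_right dot_lmul_matrix)
  have s1: "(\<Sum>i<n. t i * (z i \<bullet> (C *v d))) = 0"
  proof -
    have "(\<Sum>i<n. t i * (z i \<bullet> (C *v d))) = (\<Sum>i<n. t i *\<^sub>R z i) \<bullet> (C *v d)"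
      by (simp add: inner_sum_left)
    thus ?thesis using sz by simp
  qed
  have s2: "(\<Sum>i<n. t i * ((d v* C) \<bullet> z i)) = 0"
  proof -
    have "(\<Sum>i<n. t i * ((d v* C) \<bullet> z i)) = (d v* C) \<bullet> (\<Sum>i<n. t i *\<^sub>R z i)"
      by (simp add: inner_sum_right)
    thus ?thesis using sz by simp
  qed
  have s3: "(\<Sum>i<n. t i * (z i \<bullet> (C *v z i))) = W * trace (C ** S)"
  proof -
    have "(\<Sum>i<n. t i * (z i \<bullet> (C *v z i))) = trace (C ** (\<Sum>i<n. t i *\<^sub>R (\<chi> a b. z i $ a * z i $ b)))"
      by (rule quad_trace_sum)
    also have "(\<Sum>i<n. t i *\<^sub>R (\<chi> a b. z i $ a * z i $ b)) = W *\<^sub>R S"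
      using W(2) by (simp add: S z_def)
    also have "trace (C ** (W *\<^sub>R S)) = W * trace (C ** S)"
      by (simp add: trace_def matrix_matrix_mult_def sum_distrib_left mult_ac)
    finally show ?thesis .
  qed
  have "(\<Sum>i<n. t i * ((y i - mu) \<bullet> (C *v (y i - mu)))) =
     (\<Sum>i<n. t i * (z i \<bullet> (C *v z i))) + (\<Sum>i<n. t i * (z i \<bullet> (C *v d))) +
     (\<Sum>i<n. t i * ((d v* C) \<bullet> z i)) + (\<Sum>i<n. t i) * (d \<bullet> (C *v d))"
    unfolding e by (simp add: distrib_left sum.distrib sum_distrib_right)
  also have "\<dots> = W * trace (C ** S) + W * (d \<bullet> (C *v d))" using s1 s2 s3 W(1) by simp
  finally show ?thesis by (simp add: d_def)
qed

lemma sum_lin: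
  fixes t q :: "nat \<Rightarrow> real"
  shows "(\<Sum>i\<in>I. t i * (- (1/2) * q i - (1/2) * c - (1/2) * e)) =
     - (1/2) * (\<Sum>i\<in>I. t i * q i) - (1/2) * (\<Sum>i\<in>I. t i) * (c + e)"
proof -
  have "(\<Sum>i\<in>I. t i * (- (1/2) * q i - (1/2) * c - (1/2) * e)) =
        (\<Sum>i\<in>I. (- (1/2)) * (t i * q i) - ((1/2) * (c + e)) * t i)"
    by (rule sum.cong) (auto simp: algebra_simps)
  also have "\<dots> = (- (1/2)) * (\<Sum>i\<in>I. t i * q i) - ((1/2) * (c + e)) * (\<Sum>i\<in>I. t i)"
    by (simp add: sum_subtractf sum_distrib_left)
  finally show ?thesis by simp
qed

lemma gauss_mle:
  fixes y :: "nat \<Rightarrow> real^'d" and t :: "nat \<Rightarrow> real" and S Sg :: "real^'d^'d"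
  assumes W: "W = (\<Sum>i<n. t i)" "W > 0"
  and m: "m = (\<Sum>i<n. t i *\<^sub>R y i) /\<^sub>R W"
  and Sdef: "S = (\<Sum>i<n. t i *\<^sub>R (\<chi> a b. (y i - m) $ a * (y i - m) $ b)) /\<^sub>R W"
  and S: "pos_def_mat S" and Sg: "pos_def_mat Sg"
  shows "(\<Sum>i<n. t i * ln (gauss (y i) mu Sg)) \<le> (\<Sum>i<n. t i * ln (gauss (y i) m S))"
proof -
  define c where "c = ln ((2 * pi) ^ CARD('d))"
  define C where "C = matrix_inv Sg"
  have dS: "det S > 0" and dSg: "det Sg > 0" using S Sg pd_det_pos by auto
  have W0: "W \<noteq> 0" using W by simp
  have qS: "(\<Sum>i<n. t i * ((y i - m) \<bullet> (matrix_inv S *v (y i - m)))) = W * real CARD('d)"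
    using quad_split[OF W(1) W0 m Sdef, where C="matrix_inv S" and mu=m] pd_inv(2)[OF S] by (simp add: trace_I)
  have qSg: "(\<Sum>i<n. t i * ((y i - mu) \<bullet> (C *v (y i - mu)))) = W * trace (C ** S) + W * ((m - mu) \<bullet> (C *v (m - mu)))"
    using quad_split[OF W(1) W0 m Sdef, where C=C and mu=mu] .
  have Cpd: "pos_def_mat C" using pd_inv(1)[OF Sg] by (simp add: C_def)
  have dC: "det C * det Sg = 1" using pd_inv(4)[OF Sg] by (simp add: C_def)
  have dCp: "det C > 0" using pd_det_pos[OF Cpd] .
  have nn: "(m - mu) \<bullet> (C *v (m - mu)) \<ge> 0"
    using Cpd by (cases "m - mu = 0") (auto simp: pos_def_mat_def less_imp_le)
  have lp: "ln (det C * det S) \<le> trace (C ** S) - real CARD('d)" by (rule logdet_pair[OF Cpd S])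
  have "ln (det C * det S) = ln (det S) - ln (det Sg)"
  proof -
    have "ln (det C) + ln (det Sg) = ln (det C * det Sg)" using dCp dSg by (simp add: ln_mult)
    hence "ln (det C) + ln (det Sg) = 0" using dC by simp
    thus ?thesis using dCp dS by (simp add: ln_mult)
  qed
  hence key: "real CARD('d) + ln (det S) \<le> trace (C ** S) + (m - mu) \<bullet> (C *v (m - mu)) + ln (det Sg)"
    using lp nn by linarith
  have L: "(\<Sum>i<n. t i * ln (gauss (y i) mu Sg)) =
      - (1/2) * (\<Sum>i<n. t i * ((y i - mu) \<bullet> (C *v (y i - mu)))) - (1/2) * W * (c + ln (det Sg))"
    unfolding ln_gauss[OF dSg] C_def[symmetric] c_def[symmetric] W(1) by (rule sum_lin)
  have R: "(\<Sum>i<n. t i * ln (gauss (y i) m S)) =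
      - (1/2) * (\<Sum>i<n. t i * ((y i - m) \<bullet> (matrix_inv S *v (y i - m)))) - (1/2) * W * (c + ln (det S))"
    unfolding ln_gauss[OF dS] c_def[symmetric] W(1) by (rule sum_lin)
  have "W * (real CARD('d) + ln (det S)) \<le> W * (trace (C ** S) + (m - mu) \<bullet> (C *v (m - mu)) + ln (det Sg))"
    using key W(2) by (rule mult_left_mono[OF _ less_imp_le])
  hence "- (1/2) * (W * trace (C ** S) + W * ((m - mu) \<bullet> (C *v (m - mu)))) - (1/2) * W * (c + ln (det Sg))
     \<le> - (1/2) * (W * real CARD('d)) - (1/2) * W * (c + ln (det S))"
    by (simp add: distrib_left)
  thus ?thesis unfolding L R qS qSg .
qed



lemma sum_single:
  fixes f :: "nat \<Rightarrow> real"
  assumes "j < J" "\<And>l. l < J \<Longrightarrow> l \<noteq> j \<Longrightarrow> f l = 0"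
  shows "(\<Sum>l<J. f l) = f j"
proof -
  have "(\<Sum>l<J. f l) = f j + (\<Sum>l\<in>{..<J} - {j}. f l)" using assms(1) by (simp add: sum.remove)
  also have "(\<Sum>l\<in>{..<J} - {j}. f l) = 0" using assms(2) by (intro sum.neutral) auto
  finally show ?thesis by simp
qed

definition goodp :: "nat \<Rightarrow> ('d::finite) param \<Rightarrow> bool" where
  "goodp J th \<longleftrightarrow> (\<forall>l<J. prp th l > 0 \<and> pos_def_mat (cv th l))"

lemma term_pos:
  assumes "goodp J th" "l < J"
  shows "prp th l * gauss x (mn th l) (cv th l) > 0"
  using assms pd_det_pos gauss_pos unfolding goodp_def by (metis mult_pos_pos)

lemma mix_pos:
  assumes "J \<ge> 1" "goodp J th"
  shows "mix J th x > 0"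
  unfolding mix_def
proof (rule sum_pos)
  show "{..<J} \<noteq> {}" using assms(1) by (simp add: lessThan_empty_iff)
  fix l assume "l \<in> {..<J}"
  thus "0 < prp th l * gauss x (mn th l) (cv th l)" using term_pos[OF assms(2)] by simp
qed simp

lemma tij_pos:
  assumes "J \<ge> 1" "goodp J th" "l < J"
  shows "tij J y th i l > 0"
  unfolding tij_def using assms term_pos mix_pos by (metis divide_pos_pos)

lemma tij_sum:
  assumes "J \<ge> 1" "goodp J th"
  shows "(\<Sum>l<J. tij J y th i l) = 1"
proof -
  have "mix J th (y i) > 0" using mix_pos assms by blast
  thus ?thesis unfolding tij_def sum_divide_distrib[symmetric] mix_def[symmetric] by simp
qed

lemma ln_mix:
  assumes "J \<ge> 1" "goodp J th" "l < J"
  shows "ln (mix J th (y i)) = ln (prp th l * gauss (y i) (mn th l) (cv th l)) - ln (tij J y th i l)"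
proof -
  have m: "mix J th (y i) > 0" using mix_pos assms by blast
  have a: "prp th l * gauss (y i) (mn th l) (cv th l) > 0" using term_pos assms by blast
  have a0: "prp th l \<noteq> 0" "gauss (y i) (mn th l) (cv th l) \<noteq> 0" using a by auto
  show ?thesis unfolding tij_def using m a0 by (simp add: ln_div)
qed

lemma gibbs:
  assumes "J \<ge> 1" "goodp J th" "goodp J th'"
  shows "Dfun J n y th' th \<ge> 0"
proof -
  have "(\<Sum>l<J. tij J y th i l * ln (tij J y th i l / tij J y th' i l)) \<ge> 0" for i
  proof -
    have "(\<Sum>l<J. tij J y th i l * ln (tij J y th i l / tij J y th' i l)) \<ge> (\<Sum>l<J. tij J y th i l - tij J y th' i l)"
    proof (rule sum_mono)
      fix l assume "l \<in> {..<J}"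
      hence p: "tij J y th i l > 0" "tij J y th' i l > 0"
        using tij_pos[OF assms(1) assms(2)] tij_pos[OF assms(1) assms(3)] by auto
      have "ln (tij J y th' i l / tij J y th i l) \<le> tij J y th' i l / tij J y th i l - 1"
        using p by (intro ln_le_minus_one) simp
      hence "ln (tij J y th i l / tij J y th' i l) \<ge> 1 - tij J y th' i l / tij J y th i l"
        using p by (simp add: ln_div)
      hence "tij J y th i l * ln (tij J y th i l / tij J y th' i l) \<ge> tij J y th i l * (1 - tij J y th' i l / tij J y th i l)"
        using p by (intro mult_left_mono) auto
      thus "tij J y th i l - tij J y th' i l \<le> tij J y th i l * ln (tij J y th i l / tij J y th' i l)"
        using p by (simp add: algebra_simps)
    qed
    moreover have "(\<Sum>l<J. tij J y th i l - tij J y th' i l) = 0"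
      using tij_sum[OF assms(1,2)] tij_sum[OF assms(1,3)] by (simp add: sum_subtractf)
    ultimately show ?thesis by simp
  qed
  thus ?thesis unfolding Dfun_def by (rule sum_nonneg)
qed

lemma cemm_upd:
  fixes th :: "('d::finite) param" and J k n :: nat and y :: "nat \<Rightarrow> real^'d"
  defines "j \<equiv> k mod J"
  defines "w \<equiv> (\<lambda>i. tij J y th i j)"
  defines "W \<equiv> (\<Sum>i<n. w i)"
  defines "m \<equiv> (\<Sum>i<n. w i *\<^sub>R y i) /\<^sub>R W"
  shows "prp (cemm_step J n y k th) = (prp th)(j := W / real n)"
    "mn (cemm_step J n y k th) = (mn th)(j := m)"
    "cv (cemm_step J n y k th) = (cv th)(j := (\<Sum>i<n. w i *\<^sub>R (\<chi> a b. (y i - m) $ a * (y i - m) $ b)) /\<^sub>R W)"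
  unfolding cemm_step_def Let_def prp_def mn_def cv_def j_def w_def W_def m_def by simp_all

lemma W_pos:
  assumes "J \<ge> 1" "n \<ge> 1" "goodp J th" "j < J"
  shows "(\<Sum>i<n. tij J y th i j) > 0"
proof (rule sum_pos)
  show "{..<n} \<noteq> {}" using assms(2) by (simp add: lessThan_empty_iff)
qed (use tij_pos[OF assms(1,3,4)] in auto)

lemma step_prp_pos:
  assumes "J \<ge> 1" "n \<ge> 1" "goodp J th" "l < J"
  shows "prp (cemm_step J n y k th) l > 0"
proof (cases "l = k mod J")
  case True
  have "k mod J < J" using assms(1) by simp
  hence "(\<Sum>i<n. tij J y th i (k mod J)) > 0" using W_pos[OF assms(1-3)] by blast
  thus ?thesis using True assms(2) by (simp add: cemm_upd)
next
  case False
  thus ?thesis using assms(3,4) by (simp add: cemm_upd goodp_def)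
qed

lemma step_ineq:
  fixes th th' :: "('d::finite) param"
  assumes J: "J \<ge> 1" and n: "n \<ge> 1" and g: "goodp J th" and g': "goodp J th'"
  and th': "th' = cemm_step J n y k th"
  shows "modloglik J n y th' - modloglik J n y th \<ge> Dfun J n y th' th"
proof -
  define j where "j = k mod J"
  have jJ: "j < J" using J by (simp add: j_def)
  define w where "w i = tij J y th i j" for i
  define W where "W = (\<Sum>i<n. w i)"
  define m where "m = (\<Sum>i<n. w i *\<^sub>R y i) /\<^sub>R W"
  define S where "S = (\<Sum>i<n. w i *\<^sub>R (\<chi> a b. (y i - m) $ a * (y i - m) $ b)) /\<^sub>R W"
  have upd: "prp th' = (prp th)(j := W / real n)" "mn th' = (mn th)(j := m)" "cv th' = (cv th)(j := S)"
    unfolding th' using cemm_upd[of J n y k th] unfolding j_def w_def W_def m_def S_def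
    by (simp_all add: w_def[abs_def])
  have Wpos: "W > 0" unfolding W_def w_def using W_pos[OF J n g jJ] .
  define A where "A \<theta> i l = prp \<theta> l * gauss (y i) (mn \<theta> l) (cv \<theta> l)" for \<theta> i l
  have Apos: "A \<theta> i l > 0" if "goodp J \<theta>" "l < J" for \<theta> i l
    unfolding A_def using term_pos that by blast
  have same: "A th' i l = A th i l" if "l \<noteq> j" for i l
    unfolding A_def using that by (simp add: upd)
  let ?T = "\<lambda>i l. tij J y th i l" and ?T' = "\<lambda>i l. tij J y th' i l"
  have mixeq: "ln (mix J th' (y i)) - ln (mix J th (y i)) =
     w i * (ln (A th' i j) - ln (A th i j)) + (\<Sum>l<J. ?T i l * ln (?T i l / ?T' i l))" for i
  proof -
    let ?d = "ln (mix J th' (y i)) - ln (mix J th (y i))"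
    have "?d = (\<Sum>l<J. ?T i l) * ?d" using tij_sum[OF J g] by simp
    also have "\<dots> = (\<Sum>l<J. ?T i l * ?d)" by (simp add: sum_distrib_right)
    also have "\<dots> = (\<Sum>l<J. ?T i l * (ln (A th' i l) - ln (A th i l)) + ?T i l * ln (?T i l / ?T' i l))"
    proof (rule sum.cong[OF refl])
      fix l assume "l \<in> {..<J}"
      hence l: "l < J" by simp
      have t1: "?T i l > 0" using tij_pos[OF J g l] .
      have t2: "?T' i l > 0" using tij_pos[OF J g' l] .
      have "?d = (ln (A th' i l) - ln (?T' i l)) - (ln (A th i l) - ln (?T i l))"
        using ln_mix[OF J g l, of y i] ln_mix[OF J g' l, of y i] by (simp add: A_def)
      also have "\<dots> = (ln (A th' i l) - ln (A th i l)) + ln (?T i l / ?T' i l)"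
        using t1 t2 by (simp add: ln_div)
      finally show "?T i l * ?d = ?T i l * (ln (A th' i l) - ln (A th i l)) + ?T i l * ln (?T i l / ?T' i l)"
        by (simp add: distrib_left)
    qed
    also have "\<dots> = (\<Sum>l<J. ?T i l * (ln (A th' i l) - ln (A th i l))) + (\<Sum>l<J. ?T i l * ln (?T i l / ?T' i l))"
      by (rule sum.distrib)
    also have "(\<Sum>l<J. ?T i l * (ln (A th' i l) - ln (A th i l))) = ?T i j * (ln (A th' i j) - ln (A th i j))"
      by (rule sum_single[OF jJ]) (simp add: same)
    finally show ?thesis by (simp add: w_def)
  qed
  have psum: "(\<Sum>l<J. prp th' l) - (\<Sum>l<J. prp th l) = W / real n - prp th j"
  proof -
    have "(\<Sum>l<J. prp th' l - prp th l) = prp th' j - prp th j"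
      by (rule sum_single[OF jJ]) (simp add: upd)
    thus ?thesis by (simp add: sum_subtractf upd)
  qed
  have diff: "modloglik J n y th' - modloglik J n y th =
      (\<Sum>i<n. ln (mix J th' (y i)) - ln (mix J th (y i))) - real n * (W / real n - prp th j)"
  proof -
    have "modloglik J n y th' - modloglik J n y th =
      ((\<Sum>i<n. ln (mix J th' (y i))) - (\<Sum>i<n. ln (mix J th (y i)))) - real n * ((\<Sum>l<J. prp th' l) - (\<Sum>l<J. prp th l))"
      unfolding modloglik_def loglik_def by (simp add: algebra_simps)
    thus ?thesis unfolding psum by (simp add: sum_subtractf)
  qed
  also have "\<dots> = (\<Sum>i<n. w i * (ln (A th' i j) - ln (A th i j))) + Dfun J n y th' th - real n * (W / real n - prp th j)"
    unfolding mixeq Dfun_def by (simp add: sum.distrib)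
  finally have diff2: "modloglik J n y th' - modloglik J n y th =
     (\<Sum>i<n. w i * (ln (A th' i j) - ln (A th i j))) + Dfun J n y th' th - real n * (W / real n - prp th j)" .
  have pj: "prp th j > 0" using g jJ by (simp add: goodp_def)
  have pj': "W / real n > 0" using Wpos n by simp
  have pd: "pos_def_mat (cv th j)" using g jJ by (simp add: goodp_def)
  have "pos_def_mat (cv th' j)" using g' jJ by (simp add: goodp_def)
  hence pd': "pos_def_mat S" by (simp add: upd)
  have gp: "gauss (y i) (mn th j) (cv th j) > 0" for i using gauss_pos pd_det_pos[OF pd] by blast
  have gp': "gauss (y i) m S > 0" for i using gauss_pos pd_det_pos[OF pd'] by blast
  have lnA: "ln (A th' i j) - ln (A th i j) = (ln (W / real n) - ln (prp th j)) +
      (ln (gauss (y i) m S) - ln (gauss (y i) (mn th j) (cv th j)))" for i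
  proof -
    have a1: "A th' i j = (W / real n) * gauss (y i) m S" by (simp add: A_def upd)
    have a2: "A th i j = prp th j * gauss (y i) (mn th j) (cv th j)" by (simp add: A_def)
    show ?thesis by (simp only: a1 a2 ln_mult_pos[OF pj' gp'[of i]] ln_mult_pos[OF pj gp[of i]])
  qed
  have "(\<Sum>i<n. w i * (ln (A th' i j) - ln (A th i j))) =
      W * (ln (W / real n) - ln (prp th j)) +
      ((\<Sum>i<n. w i * ln (gauss (y i) m S)) - (\<Sum>i<n. w i * ln (gauss (y i) (mn th j) (cv th j))))"
    unfolding lnA W_def by (simp add: distrib_left sum.distrib sum_subtractf sum_distrib_right right_diff_distrib)
  moreover have G: "(\<Sum>i<n. w i * ln (gauss (y i) (mn th j) (cv th j))) \<le> (\<Sum>i<n. w i * ln (gauss (y i) m S))"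
    by (rule gauss_mle[OF W_def Wpos m_def S_def pd' pd])
  moreover have P: "W * (ln (W / real n) - ln (prp th j)) - real n * (W / real n - prp th j) \<ge> 0"
  proof -
    have "ln (prp th j / (W / real n)) \<le> prp th j / (W / real n) - 1"
      using pj pj' by (intro ln_le_minus_one) (rule divide_pos_pos)
    hence "ln (prp th j) - ln (W / real n) \<le> prp th j / (W / real n) - 1"
      by (simp only: ln_divide_pos[OF pj pj'])
    hence "W * (ln (prp th j) - ln (W / real n)) \<le> W * (prp th j / (W / real n) - 1)"
      using Wpos by (intro mult_left_mono) auto
    also have "W * (prp th j / (W / real n) - 1) = real n * prp th j - W"
      using Wpos n by (simp add: field_simps)
    finally show ?thesis using n by (simp add: algebra_simps)
  qed
  ultimately show ?thesis unfolding diff2 by linarith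
qed

theorem proposition2:
  fixes J n :: nat and y :: "nat \<Rightarrow> real^'d" and theta :: "nat \<Rightarrow> 'd param"
  assumes "J \<ge> 1" and "n \<ge> 1"
    and "in_Theta J (theta 0)"
    and "\<And>k. theta (Suc k) = cemm_step J n y k (theta k)"
    and "\<And>k j. j < J \<Longrightarrow> pos_def_mat (cv (theta k) j)"
  shows "mono (\<lambda>k. modloglik J n y (theta k))
    \<and> (\<forall>k. modloglik J n y (theta (Suc k)) - modloglik J n y (theta k)
            \<ge> Dfun J n y (theta (Suc k)) (theta k))"
proof -
  have good: "goodp J (theta k)" for k
  proof (induction k)
    case 0
    show ?case using assms(3) unfolding in_Theta_def goodp_def by blast
  next
    case (Suc k)
    show ?case unfolding goodp_def
    proof (intro allI impI conjI)
      fix l assume l: "l < J"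
      show "prp (theta (Suc k)) l > 0"
        unfolding assms(4) by (rule step_prp_pos[OF assms(1,2) Suc.IH l])
      show "pos_def_mat (cv (theta (Suc k)) l)" using assms(5) l by blast
    qed
  qed
  have step: "modloglik J n y (theta (Suc k)) - modloglik J n y (theta k) \<ge> Dfun J n y (theta (Suc k)) (theta k)" for k
    by (rule step_ineq[OF assms(1,2) good good assms(4)])
  have "modloglik J n y (theta k) \<le> modloglik J n y (theta (Suc k))" for k
    using step[of k] gibbs[OF assms(1) good good, of n y "Suc k" k] by linarith
  hence "mono (\<lambda>k. modloglik J n y (theta k))" by (simp add: mono_iff_le_Suc)
  thus ?thesis using step by blast
qed

end
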